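(* Let $\mathfrak{g}$ be a finite-dimensional Lie algebra over a field $K$ of characteristic zero, and let $(A,\cdot)$ be a CPA-structure on $\mathfrak{g}$. Then there exists an ideal $I_\infty$ such that (1) $I_\infty^{[k]}\subseteq \mathrm{Ann}_A\subseteq I_\infty$ for all $k$ large enough, and (2) the induced CPA-structure on $\mathfrak{g}/I_\infty$ is nondegenerate.
   Context: A CPA-structure on a Lie algebra $\mathfrak{g}$ is a bilinear product $x\cdot y$ on the underlying space $A$ of $\mathfrak{g}$ satisfying, for all $x,y,z$: $x\cdot y=y\cdot x$; $[x,y]\cdot z=x\cdot(y\cdot z)-y\cdot(x\cdot z)$; $x\cdot[y,z]=[x\cdot y,z]+[y,x\cdot z]$. Let $L(x)(y)=x\cdot y$. The annihilator is $\mathrm{Ann}_A=\ker L=\{x\mid L(x)=0\}$; the structure is nondegenerate if $\mathrm{Ann}_A=0$. An ideal is a subspace $I$ that is both a Lie ideal ($[\mathfrak{g},I]\subseteq I$) and an algebra ideal ($A\cdot I\subseteq I$). For an ideal $I$, $I^{[n]}=[I,[I,[\cdots,[I,I]\cdots]]]$ with $n$ factors $I$. *)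

theory Defs
  imports Complex_Main
begin

definition fin_dim_vs :: "('k::field \<Rightarrow> 'v::ab_group_add \<Rightarrow> 'v) \<Rightarrow> bool" where
  "fin_dim_vs scale \<longleftrightarrow> vector_space scale \<and> (\<exists>B. finite B \<and> module.span scale B = UNIV)"

definition bilinear_map :: "('k::field \<Rightarrow> 'v::ab_group_add \<Rightarrow> 'v) \<Rightarrow> ('v \<Rightarrow> 'v \<Rightarrow> 'v) \<Rightarrow> bool" where
  "bilinear_map scale f \<longleftrightarrow>
     (\<forall>x. Vector_Spaces.linear scale scale (f x)) \<and> (\<forall>y. Vector_Spaces.linear scale scale (\<lambda>x. f x y))"

definition lie_algebra :: "('k::field \<Rightarrow> 'v::ab_group_add \<Rightarrow> 'v) \<Rightarrow> ('v \<Rightarrow> 'v \<Rightarrow> 'v) \<Rightarrow> bool" where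
  "lie_algebra scale br \<longleftrightarrow> bilinear_map scale br \<and> (\<forall>x. br x x = 0) \<and>
     (\<forall>x y z. br x (br y z) + br y (br z x) + br z (br x y) = 0)"

definition CPA_structure :: "('k::field \<Rightarrow> 'v::ab_group_add \<Rightarrow> 'v) \<Rightarrow> ('v \<Rightarrow> 'v \<Rightarrow> 'v) \<Rightarrow> ('v \<Rightarrow> 'v \<Rightarrow> 'v) \<Rightarrow> bool" where
  "CPA_structure scale br p \<longleftrightarrow> bilinear_map scale p \<and>
     (\<forall>x y. p x y = p y x) \<and>
     (\<forall>x y z. p (br x y) z = p x (p y z) - p y (p x z)) \<and>
     (\<forall>x y z. p x (br y z) = br (p x y) z + br y (p x z))"

definition annihilator :: "('v \<Rightarrow> 'v \<Rightarrow> 'v::zero) \<Rightarrow> 'v set" where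
  "annihilator p = {x. \<forall>y. p x y = 0}"

definition CPA_ideal :: "('k::field \<Rightarrow> 'v::ab_group_add \<Rightarrow> 'v) \<Rightarrow> ('v \<Rightarrow> 'v \<Rightarrow> 'v) \<Rightarrow> ('v \<Rightarrow> 'v \<Rightarrow> 'v) \<Rightarrow> 'v set \<Rightarrow> bool" where
  "CPA_ideal scale br p I \<longleftrightarrow> module.subspace scale I \<and>
     (\<forall>x y. y \<in> I \<longrightarrow> br x y \<in> I) \<and> (\<forall>x y. y \<in> I \<longrightarrow> p x y \<in> I)"

definition bracket_sub :: "('k::field \<Rightarrow> 'v::ab_group_add \<Rightarrow> 'v) \<Rightarrow> ('v \<Rightarrow> 'v \<Rightarrow> 'v) \<Rightarrow> 'v set \<Rightarrow> 'v set \<Rightarrow> 'v set" where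
  "bracket_sub scale br U W = module.span scale {br u w | u w. u \<in> U \<and> w \<in> W}"

text \<open>I^[n] = [I,[I,...,[I,I]...]] with n factors (n \<ge> 1); I^[0] := UNIV by convention.\<close>
fun lie_power :: "('k::field \<Rightarrow> 'v::ab_group_add \<Rightarrow> 'v) \<Rightarrow> ('v \<Rightarrow> 'v \<Rightarrow> 'v) \<Rightarrow> 'v set \<Rightarrow> nat \<Rightarrow> 'v set" where
  "lie_power scale br I 0 = UNIV"
| "lie_power scale br I (Suc 0) = I"
| "lie_power scale br I (Suc (Suc n)) = bracket_sub scale br I (lie_power scale br I (Suc n))"

text \<open>For an ideal I, the induced CPA-structure on g/I is nondegenerate: its annihilator
  {x + I | x \<cdot> y \<in> I for all y} is zero, i.e. x \<cdot> A \<subseteq> I implies x \<in> I.\<close>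
definition quotient_nondegenerate :: "('v \<Rightarrow> 'v \<Rightarrow> 'v) \<Rightarrow> 'v set \<Rightarrow> bool" where
  "quotient_nondegenerate p I \<longleftrightarrow> (\<forall>x. (\<forall>y. p x y \<in> I) \<longrightarrow> x \<in> I)"

end

theory Submission
  imports Defs
begin

fun Jc :: "('v::ab_group_add \<Rightarrow> 'v \<Rightarrow> 'v) \<Rightarrow> nat \<Rightarrow> 'v set" where
  "Jc p 0 = {0}"
| "Jc p (Suc m) = {x. \<forall>y. p x y \<in> Jc p m}"

locale cpa_ctx =
  fixes scale :: "'k::field \<Rightarrow> 'v::ab_group_add \<Rightarrow> 'v"
    and br p :: "'v \<Rightarrow> 'v \<Rightarrow> 'v"
  assumes vs: "vector_space scale"
    and lie: "lie_algebra scale br"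
    and cpa: "CPA_structure scale br p"
begin

lemma md: "module scale" using vs unfolding vector_space_def module_def .

lemma lin_facts:
  assumes "Vector_Spaces.linear scale scale f"
  shows "f (x + y) = f x + f y" "f (scale c x) = scale c (f x)" "f 0 = 0" "f (- x) = - f x"
proof -
  have A: "\<And>x y. f (x + y) = f x + f y" and B: "\<And>c x. f (scale c x) = scale c (f x)"
    using assms by (auto simp: Vector_Spaces.linear_iff)
  show "f (x + y) = f x + f y" "f (scale c x) = scale c (f x)" using A B by auto
  have "f 0 = f 0 + f 0" using A[of 0 0] by simp
  then show z: "f 0 = 0" by simp
  have "f (x + - x) = 0" using z by simp
  then show "f (- x) = - f x" using A[of x "-x"] by (simp add: add_eq_0_iff)
qed

lemma p_lin1: "Vector_Spaces.linear scale scale (\<lambda>x. p x y)"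
  using cpa by (simp add: CPA_structure_def bilinear_map_def)
lemma p_lin2: "Vector_Spaces.linear scale scale (p x)"
  using cpa by (simp add: CPA_structure_def bilinear_map_def)
lemma br_lin2: "Vector_Spaces.linear scale scale (br x)"
  using lie by (simp add: lie_algebra_def bilinear_map_def)
lemma br_lin1: "Vector_Spaces.linear scale scale (\<lambda>x. br x y)"
  using lie by (simp add: lie_algebra_def bilinear_map_def)

lemma p_add1: "p (x + x') y = p x y + p x' y" using lin_facts(1)[OF p_lin1] .
lemma p_scale1: "p (scale c x) y = scale c (p x y)" using lin_facts(2)[OF p_lin1] .
lemma p_01: "p 0 y = 0" using lin_facts(3)[OF p_lin1] .
lemma p_02: "p x 0 = 0" using lin_facts(3)[OF p_lin2] .
lemma br_02: "br x 0 = 0" using lin_facts(3)[OF br_lin2] .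

lemma p_comm: "p x y = p y x" using cpa unfolding CPA_structure_def by blast
lemma ax2: "p (br x y) z = p x (p y z) - p y (p x z)" using cpa unfolding CPA_structure_def by blast
lemma ax3: "p x (br y z) = br (p x y) z + br y (p x z)" using cpa unfolding CPA_structure_def by blast

lemma br_anti: "br x y = - br y x"
proof -
  have "br (x + y) (x + y) = 0" using lie by (simp add: lie_algebra_def)
  also have "br (x + y) (x + y) = br x (x + y) + br y (x + y)" using lin_facts(1)[OF br_lin1] .
  also have "\<dots> = br x x + br x y + (br y x + br y y)"
    using lin_facts(1)[OF br_lin2] by simp
  finally have "br x y + br y x = 0" using lie by (simp add: lie_algebra_def)
  then show ?thesis by (simp add: eq_neg_iff_add_eq_0)
qed

lemma Jc_sub: "module.subspace scale (Jc p m)"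
proof (induction m)
  case 0
  show ?case using module.scale_zero_right[OF md] by (simp add: module.subspace_def[OF md])
next
  case (Suc m)
  show ?case
    unfolding module.subspace_def[OF md]
    using module.subspace_0[OF md Suc] module.subspace_add[OF md Suc] module.subspace_scale[OF md Suc]
    by (auto simp: p_01 p_add1 p_scale1)
qed

lemma Jc_ideal: "(\<forall>x y. y \<in> Jc p m \<longrightarrow> br x y \<in> Jc p m) \<and> (\<forall>x y. y \<in> Jc p m \<longrightarrow> p x y \<in> Jc p m)"
proof (induction m)
  case 0
  then show ?case by (simp add: br_02 p_02)
next
  case (Suc m)
  have S: "module.subspace scale (Jc p m)" by (rule Jc_sub)
  have IHb: "\<And>x y. y \<in> Jc p m \<Longrightarrow> br x y \<in> Jc p m" and IHp: "\<And>x y. y \<in> Jc p m \<Longrightarrow> p x y \<in> Jc p m"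
    using Suc by auto
  have 1: "br x y \<in> Jc p (Suc m)" if y: "y \<in> Jc p (Suc m)" for x y
  proof -
    have "p (br x y) z \<in> Jc p m" for z
    proof -
      have a: "p x (p y z) \<in> Jc p m" using y IHp by simp
      have b: "p y (p x z) \<in> Jc p m" using y by simp
      show ?thesis using module.subspace_diff[OF md S a b] ax2 by simp
    qed
    then show ?thesis by simp
  qed
  have 2: "p x y \<in> Jc p (Suc m)" if y: "y \<in> Jc p (Suc m)" for x y
  proof -
    have "p (p x y) z \<in> Jc p m" for z
    proof -
      have e1: "p (br z x) y = p z (p x y) - p x (p z y)" by (rule ax2)
      have e2: "p (br z x) y = br (p y z) x + br z (p y x)" using ax3 p_comm by metis
      have pyz: "p y z \<in> Jc p m" "p y x \<in> Jc p m" using y by auto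
      have a: "p x (p z y) \<in> Jc p m" using pyz IHp p_comm by metis
      have b: "br (p y z) x \<in> Jc p m"
        using module.subspace_neg[OF md S IHb[OF pyz(1), of x]] br_anti by metis
      have c: "br z (p y x) \<in> Jc p m" using IHb pyz by auto
      have "p z (p x y) = p x (p z y) + (br (p y z) x + br z (p y x))"
        using e1 e2 by (metis diff_eq_eq add.commute)
      then have "p z (p x y) \<in> Jc p m"
        using module.subspace_add[OF md S a module.subspace_add[OF md S b c]] by simp
      then show ?thesis using p_comm by metis
    qed
    then show ?thesis by simp
  qed
  show ?case using 1 2 by blast
qed

lemma Jc_mono_Suc: "Jc p m \<subseteq> Jc p (Suc m)"
proof (induction m)
  case 0 then show ?case by (auto simp: p_01)
next
  case (Suc m) then show ?case by auto
qed

lemma Jc_mono: "m \<le> n \<Longrightarrow> Jc p m \<subseteq> Jc p n"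
  using lift_Suc_mono_le[of "Jc p", OF Jc_mono_Suc] by blast

definition F :: "nat \<Rightarrow> nat \<Rightarrow> 'v set" where
  "F N j = (if j = 0 then UNIV else Jc p (N - j))"

lemma F_sub: "module.subspace scale (F N j)"
  unfolding F_def using Jc_sub module.subspace_UNIV[OF md] by auto

lemma F_step: assumes x: "x \<in> Jc p N" and z: "z \<in> F N j" shows "p x z \<in> F N (Suc j)"
proof (cases "j = 0")
  case True
  show ?thesis
  proof (cases N)
    case 0 then show ?thesis using x True by (simp add: F_def p_01)
  next
    case (Suc n) then show ?thesis using x True by (simp add: F_def)
  qed
next
  case False
  then have z': "z \<in> Jc p (N - j)" using z by (simp add: F_def)
  show ?thesis
  proof (cases "N - j")
    case 0
    then have "N - Suc j = 0" by simp
    then show ?thesis using z' 0 by (simp add: F_def p_02)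
  next
    case (Suc m)
    then have "N - Suc j = m" by simp
    then show ?thesis using z' Suc p_comm[of x z] by (simp add: F_def)
  qed
qed

lemma F_power: "v \<in> lie_power scale br (Jc p N) (Suc n) \<Longrightarrow> z \<in> F N j \<Longrightarrow> p v z \<in> F N (j + Suc n)"
proof (induction n arbitrary: v j z)
  case 0
  then show ?case using F_step by simp
next
  case (Suc n)
  define S where "S = {v. \<forall>j z. z \<in> F N j \<longrightarrow> p v z \<in> F N (j + Suc (Suc n))}"
  have SS: "module.subspace scale S"
    unfolding S_def module.subspace_def[OF md]
    using module.subspace_0[OF md F_sub] module.subspace_add[OF md F_sub]
      module.subspace_scale[OF md F_sub]
    by (auto simp: p_01 p_add1 p_scale1)
  have gen: "{br u w | u w. u \<in> Jc p N \<and> w \<in> lie_power scale br (Jc p N) (Suc n)} \<subseteq> S"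
  proof (clarsimp simp: S_def)
    fix u w j z
    assume u: "u \<in> Jc p N" and w: "w \<in> lie_power scale br (Jc p N) (Suc n)" and z: "z \<in> F N j"
    have a: "p u (p w z) \<in> F N (j + Suc (Suc n))"
      using F_step[OF u Suc.IH[OF w z]] by simp
    have b: "p w (p u z) \<in> F N (j + Suc (Suc n))"
      using Suc.IH[OF w F_step[OF u z]] by simp
    show "p (br u w) z \<in> F N (Suc (Suc (j + n)))"
      using module.subspace_diff[OF md F_sub a b] ax2 by simp
  qed
  have "lie_power scale br (Jc p N) (Suc (Suc n)) \<subseteq> S"
    using module.span_minimal[OF md gen SS] by (simp add: bracket_sub_def)
  then show ?case using Suc.prems S_def by blast
qed

end

theorem proposition2p6:
  fixes scale :: "'k::field_char_0 \<Rightarrow> 'v::ab_group_add \<Rightarrow> 'v"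
    and br p :: "'v \<Rightarrow> 'v \<Rightarrow> 'v"
  assumes "fin_dim_vs scale"
    and "lie_algebra scale br"
    and "CPA_structure scale br p"
  shows "\<exists>I. CPA_ideal scale br p I \<and>
           (\<exists>N. \<forall>k\<ge>N. lie_power scale br I k \<subseteq> annihilator p) \<and>
           annihilator p \<subseteq> I \<and>
           quotient_nondegenerate p I"
proof -
  have vs: "vector_space scale" and "\<exists>B. finite B \<and> module.span scale B = UNIV"
    using assms(1) by (auto simp: fin_dim_vs_def)
  then obtain B where fB: "finite B" and sB: "module.span scale B = UNIV" by blast
  interpret C: cpa_ctx scale br p by (rule cpa_ctx.intro[OF vs assms(2,3)])
  obtain B' where iB': "module.independent scale B'" and sB': "UNIV \<subseteq> module.span scale B'"
    using vector_space.basis_exists[OF vs, of UNIV] by blast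
  have fB': "finite B'" using vector_space.independent_span_bound[OF vs fB iB'] sB by simp
  interpret V: finite_dimensional_vector_space scale B'
    by (unfold_locales; use fB' iB' sB' vs in \<open>auto simp: vector_space_def\<close>)
  have stab: "\<exists>N. Jc p (Suc N) = Jc p N"
  proof (rule ccontr)
    assume "\<not> ?thesis"
    then have ne: "\<And>N. Jc p N \<subset> Jc p (Suc N)" using C.Jc_mono_Suc by blast
    have "n \<le> V.dim (Jc p n)" for n
    proof (induction n)
      case (Suc n)
      have "V.dim (Jc p n) < V.dim (Jc p (Suc n))"
      proof -
        have sp: "V.span (Jc p m) = Jc p m" for m using C.Jc_sub[of m] V.span_eq_iff by blast
        show ?thesis using V.dim_psubset[of "Jc p n" "Jc p (Suc n)"] ne[of n] unfolding sp .
      qed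
      then show ?case using Suc by simp
    qed simp
    then have "Suc V.dimension \<le> V.dimension"
      using V.dim_subset_UNIV[of "Jc p (Suc V.dimension)"] le_trans by blast
    then show False by simp
  qed
  then obtain N where N: "Jc p (Suc N) = Jc p N" by blast
  define I where "I = Jc p (Suc N)"
  have stab2: "Jc p (Suc (Suc N)) = Jc p (Suc N)" using N by (metis Jc.simps(2))
  have id: "CPA_ideal scale br p I" unfolding I_def CPA_ideal_def using C.Jc_sub C.Jc_ideal by blast
  have ann: "annihilator p \<subseteq> I"
  proof -
    have "annihilator p = Jc p 1" by (auto simp: annihilator_def)
    then show ?thesis unfolding I_def using C.Jc_mono[of 1 "Suc N"] by simp
  qed
  have nd: "quotient_nondegenerate p I"
    unfolding quotient_nondegenerate_def I_def
  proof (intro allI impI)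
    fix x assume "\<forall>y. p x y \<in> Jc p (Suc N)"
    then have "x \<in> Jc p (Suc (Suc N))" unfolding Jc.simps(2)[of p "Suc N"] by blast
    then show "x \<in> Jc p (Suc N)" using stab2 by (simp only:)
  qed
  have pw: "\<forall>k\<ge>Suc (Suc N). lie_power scale br I k \<subseteq> annihilator p"
  proof (intro allI impI subsetI)
    fix k v assume k: "Suc (Suc N) \<le> k" and v: "v \<in> lie_power scale br I k"
    obtain n where kn: "k = Suc n" using k by (cases k) auto
    have "p v z \<in> C.F (Suc N) (0 + Suc n)" for z
      using C.F_power[of v "Suc N" n z 0] v kn by (simp add: I_def C.F_def)
    then have "p v z = 0" for z using k kn by (simp add: C.F_def)
    then show "v \<in> annihilator p" by (simp add: annihilator_def)
  qed
  show ?thesis using id ann nd pw by blast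
qed

end
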